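(* Let $\mathcal P$ be a finite set with $|\mathcal P|=n$, $\kappa\in(0,1)$, $\lambda>0$, $\ell_1,\dots,\ell_T:\mathcal P\to[0,1]$, $\mu_1(i)=\kappa$ for all $i$, $\Gamma$ the set of $\kappa$-dense measures on $\mathcal P$, and $\mu_{T+1}=\Pi_\Gamma\tilde\mu_{T+1}$ with $\tilde\mu_{T+1}(i)=e^{-\lambda\sum_{t=1}^T\ell_t(i)}\mu_1(i)$. Writing $M(\hat\mu,Q_t)=\mathbb{E}_{i\sim\hat\mu}[\ell_t(i)]$, for all $T\ge1$, \[ \mu_{T+1}=\arg\min_{\mu\in\Gamma}\Big[\lambda|\mu|\sum_{t=1}^TM(\hat\mu,Q_t)+\mathrm{KL}(\mu\|\mu_1)\Big]. \]
   Context: A measure on $\mathcal P$ is $\mu:\mathcal P\to[0,1]$; $|\mu|=\sum_i\mu(i)$; $\kappa$-dense means $|\mu|/n\ge\kappa$; $\hat\mu=\mu/|\mu|$. $\mathrm{KL}(\mu_1\|\mu_2)=\sum_i\mu_1(i)\log(\mu_1(i)/\mu_2(i))+\mu_2(i)-\mu_1(i)$. $\Pi_\Gamma\tilde\mu=\arg\min_{\mu\in\Gamma}\mathrm{KL}(\mu\|\tilde\mu)$. $Q_t$ is the column strategy of round $t$, inducing loss vector $\ell_t$. *)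

theory Defs
  imports Complex_Main
begin

text \<open>The ground set P is modelled by a finite type 'a, so n = CARD('a).
  A measure is a function mu :: 'a => real with values in [0,1].\<close>

definition is_measure :: "('a::finite \<Rightarrow> real) \<Rightarrow> bool" where
  "is_measure mu \<longleftrightarrow> (\<forall>i. 0 \<le> mu i \<and> mu i \<le> 1)"

definition mass :: "('a::finite \<Rightarrow> real) \<Rightarrow> real" where
  "mass mu = (\<Sum>i\<in>UNIV. mu i)"

definition normalize :: "('a::finite \<Rightarrow> real) \<Rightarrow> 'a \<Rightarrow> real" where
  "normalize mu = (\<lambda>i. mu i / mass mu)"

definition dense_measures :: "real \<Rightarrow> ('a::finite \<Rightarrow> real) set" where
  "dense_measures kappa = {mu. is_measure mu \<and> mass mu / real (card (UNIV :: 'a set)) \<ge> kappa}"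

text \<open>Generalized KL divergence (with the convention 0 log 0 = 0, automatic
  since 0 * ln x = 0 in HOL).\<close>
definition KL :: "('a::finite \<Rightarrow> real) \<Rightarrow> ('a \<Rightarrow> real) \<Rightarrow> real" where
  "KL mu1 mu2 = (\<Sum>i\<in>UNIV. mu1 i * ln (mu1 i / mu2 i) + mu2 i - mu1 i)"

text \<open>M(p, Q_t) = E_{i ~ p}[l_t(i)], where the column strategy Q_t is represented by
  the loss vector l_t it induces.\<close>
definition expected_loss :: "('a::finite \<Rightarrow> real) \<Rightarrow> ('a \<Rightarrow> real) \<Rightarrow> real" where
  "expected_loss p l = (\<Sum>i\<in>UNIV. p i * l i)"

definition argmin_set :: "('b \<Rightarrow> real) \<Rightarrow> 'b set \<Rightarrow> 'b set" where
  "argmin_set f G = {x \<in> G. \<forall>y\<in>G. f x \<le> f y}"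

definition KL_proj :: "('a::finite \<Rightarrow> real) set \<Rightarrow> ('a \<Rightarrow> real) \<Rightarrow> ('a \<Rightarrow> real) set" where
  "KL_proj G mut = argmin_set (\<lambda>mu. KL mu mut) G"

end

theory Submission
  imports Defs
begin

lemma argmin_shift:
  assumes "\<And>x. x \<in> G \<Longrightarrow> f x = g x + (c::real)"
  shows "argmin_set f G = argmin_set g G"
  using assms unfolding argmin_set_def by force

theorem mainTheorem7:
  fixes kappa lambda :: real
    and l :: "nat \<Rightarrow> 'a::finite \<Rightarrow> real"
    and T :: nat
    and mu1 mut :: "'a \<Rightarrow> real"
  assumes kappa: "0 < kappa" "kappa < 1"
    and lambda: "0 < lambda"
    and T: "T \<ge> 1"
    and loss: "\<And>t i. t \<in> {1..T} \<Longrightarrow> 0 \<le> l t i \<and> l t i \<le> 1"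
    and mu1_def: "mu1 = (\<lambda>i. kappa)"
    and mut_def: "mut = (\<lambda>i. exp (- lambda * (\<Sum>t=1..T. l t i)) * mu1 i)"
  shows "KL_proj (dense_measures kappa) mut =
         argmin_set (\<lambda>mu. lambda * mass mu * (\<Sum>t=1..T. expected_loss (normalize mu) (l t))
                          + KL mu mu1) (dense_measures kappa)"
  unfolding KL_proj_def
proof (rule argmin_shift)
  define L where "L = (\<lambda>i. \<Sum>t=1..T. l t i)"
  fix mu :: "'a \<Rightarrow> real"
  assume "mu \<in> dense_measures kappa"
  hence nn: "\<And>i. 0 \<le> mu i" and md: "mass mu / real (card (UNIV::'a set)) \<ge> kappa"
    unfolding dense_measures_def is_measure_def by auto
  have "mass mu > 0"
  proof -
    have "mass mu / real (card (UNIV::'a set)) > 0" using md kappa by linarith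
    moreover have "real (card (UNIV::'a set)) > 0" by (simp add: finite_UNIV_card_ge_0)
    ultimately show ?thesis by (simp add: zero_less_divide_iff)
  qed
  have trm: "mu i * ln (mu i / mut i) = mu i * ln (mu i / kappa) + lambda * (mu i * L i)" for i
  proof (cases "mu i = 0")
    case True then show ?thesis by simp
  next
    case False
    hence p: "mu i > 0" using nn[of i] by simp
    have "ln (mu i / mut i) = ln (mu i) - (- lambda * L i) - ln kappa"
      unfolding mut_def mu1_def L_def using p kappa
      by (simp add: ln_div ln_mult)
    moreover have "ln (mu i / kappa) = ln (mu i) - ln kappa" using p kappa by (simp add: ln_div)
    ultimately have "ln (mu i / mut i) = ln (mu i / kappa) + lambda * L i" by linarith
    thus ?thesis by (simp add: distrib_left)
  qed
  have exp: "lambda * mass mu * (\<Sum>t=1..T. expected_loss (normalize mu) (l t))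
      = lambda * (\<Sum>i\<in>UNIV. mu i * L i)"
  proof -
    have "mass mu * (\<Sum>t=1..T. expected_loss (normalize mu) (l t))
        = (\<Sum>t=1..T. \<Sum>i\<in>UNIV. mass mu * (mu i / mass mu * l t i))"
      unfolding expected_loss_def normalize_def by (simp add: sum_distrib_left)
    also have "\<dots> = (\<Sum>t=1..T. \<Sum>i\<in>UNIV. mu i * l t i)"
      using \<open>mass mu > 0\<close> by simp
    also have "\<dots> = (\<Sum>i\<in>UNIV. mu i * L i)"
      unfolding L_def sum_distrib_left by (rule sum.swap)
    finally show ?thesis by simp
  qed
  show "KL mu mut = (lambda * mass mu * (\<Sum>t=1..T. expected_loss (normalize mu) (l t))
                          + KL mu mu1) + (\<Sum>i\<in>UNIV. mut i - kappa)"
    unfolding exp KL_def trm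
    by (simp add: mu1_def sum.distrib sum_subtractf sum_distrib_left algebra_simps)
qed

end
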